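(* Let $\alpha_0,\dots,\alpha_{L-1}$ be i.i.d. uniform on $(-\tfrac12,\tfrac12)$, extended $L$-periodically, and let $\omega_i=\Delta\alpha_i-[\![\Delta\alpha_i]\!]$ for $i=0,\dots,L-1$. Then $(\omega_0,\dots,\omega_{L-1})$ has the distribution obtained by taking i.i.d. uniform $(-\tfrac12,\tfrac12)$ variates and conditioning them to sum to an integer; that is, $\vec\omega$ is distributed according to the normalized surface measure on the intersection of the cube $(-\tfrac12,\tfrac12)^L$ with the family of hyperplanes $\{x_0+x_1+\dots+x_{L-1}\in\mathbb Z\}$.
   Context: $\Delta$ is the periodic discrete Laplacian, $\Delta\alpha_i=\alpha_{i-1}-2\alpha_i+\alpha_{i+1}$ with indices mod $L$; $[\![x]\!]$ is the integer nearest to $x$. *)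

theory Defs
  imports "HOL-Probability.Probability"
begin

text \<open>Vectors in R^L are represented as extensional functions nat => real on {..<L}.\<close>

definition lap :: "nat \<Rightarrow> (nat \<Rightarrow> real) \<Rightarrow> nat \<Rightarrow> real" where
  "lap L a i = a ((i + L - 1) mod L) - 2 * a (i mod L) + a ((i + 1) mod L)"

definition omega :: "nat \<Rightarrow> (nat \<Rightarrow> real) \<Rightarrow> nat \<Rightarrow> real" where
  "omega L a = (\<lambda>i\<in>{..<L}. lap L a i - of_int (round (lap L a i)))"

definition cube :: "nat \<Rightarrow> (nat \<Rightarrow> real) set" where
  "cube L = PiE {..<L} (\<lambda>_. {-1/2<..<1/2})"

definition hyp_param :: "nat \<Rightarrow> int \<Rightarrow> (nat \<Rightarrow> real) \<Rightarrow> nat \<Rightarrow> real" where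
  "hyp_param L k y = (\<lambda>i\<in>{..<L}. if i < L - 1 then y i else of_int k - (\<Sum>j<L - 1. y j))"

text \<open>(L-1)-dimensional surface measure of a set B contained in the family of hyperplanes
  {x_0+...+x_{L-1} \<in> Z}: on each hyperplane, the surface measure is the pushforward of
  (L-1)-dimensional Lebesgue measure under the graph map, times the Jacobian factor sqrt L.\<close>
definition surf :: "nat \<Rightarrow> (nat \<Rightarrow> real) set \<Rightarrow> ennreal" where
  "surf L B = (\<integral>\<^sup>+ k. ennreal (sqrt (real L)) *
      emeasure (PiM {..<L - 1} (\<lambda>_. lborel)) (hyp_param L k -` B \<inter> space (PiM {..<L - 1} (\<lambda>_. lborel)))
    \<partial>count_space UNIV)"

definition norm_surf :: "nat \<Rightarrow> (nat \<Rightarrow> real) set \<Rightarrow> ennreal" where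
  "norm_surf L A = surf L (A \<inter> cube L) / surf L (cube L)"

end

theory Submission
  imports Defs
begin

definition fr :: "real \<Rightarrow> real" where "fr x = x - of_int (round x)"

lemma fr_measurable[measurable]: "fr \<in> borel_measurable borel"
proof -
  have "(\<lambda>x::real. real_of_int \<lfloor>x + 1/2\<rfloor>) \<in> borel_measurable borel"
    using measurable_compose[OF _ borel_measurable_real_floor, of "\<lambda>x. x + 1/2" borel] by simp
  then show ?thesis unfolding fr_def round_def by measurable
qed

lemma round_add_int: "round (x + of_int n) = round x + n"
  unfolding round_def by (metis add.commute add.left_commute floor_add_int)

lemma fr_add_int[simp]: "fr (x + of_int n) = fr x"
  unfolding fr_def by (simp add: round_add_int)

lemma fr_ge: "-1/2 \<le> fr x" and fr_lt: "fr x < 1/2"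
  unfolding fr_def using of_int_round_le[of x] of_int_round_gt[of x] by auto

lemma fr_id: "-1/2 \<le> x \<Longrightarrow> x < 1/2 \<Longrightarrow> fr x = x"
proof -
  assume "-1/2 \<le> x" "x < 1/2"
  then have "round x = 0" by (intro round_unique) auto
  then show ?thesis unfolding fr_def by simp
qed

lemma fr_diff_int: "\<exists>n. x = fr x + of_int n"
  unfolding fr_def by (intro exI[of _ "round x"]) simp

lemma fr_cong: "x - y = of_int n \<Longrightarrow> fr x = fr y"
  by (metis add_diff_cancel_left' diff_add_cancel fr_add_int)

lemma UI:
  fixes h :: "real \<Rightarrow> ennreal"
  assumes [measurable]: "h \<in> borel_measurable borel"
  shows "(\<integral>\<^sup>+z. indicator {s<..<s+1} z * h (fr z) \<partial>lborel) = (\<integral>\<^sup>+z. indicator {-1/2<..<1/2} z * h z \<partial>lborel)"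
proof -
  define r where "r = round s"
  define t where "t = s - of_int r"
  have t1: "-1/2 \<le> t" "t < 1/2" using fr_ge[of s] fr_lt[of s] unfolding t_def r_def fr_def by auto
  have pw: "indicator {s<..<s+1} z * h (fr z) = indicator {s<..<of_int r + 1/2} z * h (z - of_int r)
      + indicator {of_int r + 1/2..<s+1} z * h (z - of_int r - 1)" for z
  proof (cases "z \<in> {s<..<of_int r + 1/2}")
    case True
    then have "round z = r" using t1 unfolding t_def by (intro round_unique) auto
    then show ?thesis using True t1 unfolding t_def fr_def by (auto simp: indicator_def)
  next
    case F: False
    show ?thesis
    proof (cases "z \<in> {of_int r + 1/2..<s+1}")
      case True
      then have "round z = r + 1" using t1 unfolding t_def by (intro round_unique) auto
      then show ?thesis using True F t1 unfolding t_def fr_def by (auto simp: indicator_def algebra_simps)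
    next
      case False
      then show ?thesis using F t1 unfolding t_def by (auto simp: indicator_def)
    qed
  qed
  have "(\<integral>\<^sup>+z. indicator {s<..<s+1} z * h (fr z) \<partial>lborel) =
     (\<integral>\<^sup>+z. indicator {s<..<of_int r + 1/2} z * h (z - of_int r) \<partial>lborel) +
     (\<integral>\<^sup>+z. indicator {of_int r + 1/2..<s+1} z * h (z - of_int r - 1) \<partial>lborel)"
    unfolding pw by (rule nn_integral_add) measurable
  also have "(\<integral>\<^sup>+z. indicator {s<..<of_int r + 1/2} z * h (z - of_int r) \<partial>lborel)
      = (\<integral>\<^sup>+w. indicator {t<..<1/2} w * h w \<partial>lborel)"
    by (subst nn_integral_real_affine[where c=1 and t="of_int r"])
       (auto simp: t_def indicator_def intro!: nn_integral_cong)
  also have "(\<integral>\<^sup>+z. indicator {of_int r + 1/2..<s+1} z * h (z - of_int r - 1) \<partial>lborel)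
      = (\<integral>\<^sup>+w. indicator {-1/2..<t} w * h w \<partial>lborel)"
    by (subst nn_integral_real_affine[where c=1 and t="of_int r + 1"])
       (auto simp: t_def indicator_def intro!: nn_integral_cong)
  also have "(\<integral>\<^sup>+w. indicator {t<..<1/2} w * h w \<partial>lborel) + (\<integral>\<^sup>+w. indicator {-1/2..<t} w * h w \<partial>lborel)
     = (\<integral>\<^sup>+w. indicator {t<..<1/2} w * h w + indicator {-1/2..<t} w * h w \<partial>lborel)"
    by (rule nn_integral_add[symmetric]) measurable
  also have "\<dots> = (\<integral>\<^sup>+z. indicator {-1/2<..<1/2} z * h z \<partial>lborel)"
  proof (rule nn_integral_cong_AE)
    have "AE w in lborel. w \<noteq> t" "AE w in lborel. w \<noteq> -1/2" by (rule AE_lborel_singleton)+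
    then show "AE w in lborel. indicator {t<..<1/2} w * h w + indicator {-1/2..<t} w * h w = indicator {-1/2<..<1/2} w * h w"
      by eventually_elim (use t1 in \<open>auto simp: indicator_def\<close>)
  qed
  finally show ?thesis .
qed

lemma UIn:
  fixes h :: "real \<Rightarrow> ennreal"
  assumes [measurable]: "h \<in> borel_measurable borel"
  shows "(\<integral>\<^sup>+z. indicator {s<..<s+real n} z * h (fr z) \<partial>lborel) = of_nat n * (\<integral>\<^sup>+z. indicator {-1/2<..<1/2} z * h z \<partial>lborel)"
proof (induction n)
  case 0
  then show ?case by simp
next
  case (Suc n)
  have "(\<integral>\<^sup>+z. indicator {s<..<s+real (Suc n)} z * h (fr z) \<partial>lborel)
     = (\<integral>\<^sup>+z. indicator {s<..<s+real n} z * h (fr z) + indicator {s+real n<..<(s+real n)+1} z * h (fr z) \<partial>lborel)"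
  proof (rule nn_integral_cong_AE)
    have "AE w in lborel. w \<noteq> s + real n" by (rule AE_lborel_singleton)
    then show "AE z in lborel. indicator {s<..<s+real (Suc n)} z * h (fr z) = indicator {s<..<s+real n} z * h (fr z) + indicator {s+real n<..<(s+real n)+1} z * h (fr z)"
      by eventually_elim (auto simp: indicator_def)
  qed
  also have "\<dots> = (\<integral>\<^sup>+z. indicator {s<..<s+real n} z * h (fr z) \<partial>lborel) + (\<integral>\<^sup>+z. indicator {s+real n<..<(s+real n)+1} z * h (fr z) \<partial>lborel)"
    by (rule nn_integral_add) measurable
  also have "\<dots> = of_nat (Suc n) * (\<integral>\<^sup>+z. indicator {-1/2<..<1/2} z * h z \<partial>lborel)"
    unfolding Suc UI[OF assms] by (simp add: distrib_right)
  finally show ?case .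
qed

lemma scale_pos:
  fixes h :: "real \<Rightarrow> ennreal"
  assumes [measurable]: "h \<in> borel_measurable borel" and c: "c > 0"
  shows "(\<integral>\<^sup>+y. indicator {-1/2<..<1/2} y * h (fr (real c * y + b)) \<partial>lborel) = (\<integral>\<^sup>+z. indicator {-1/2<..<1/2} z * h z \<partial>lborel)"
proof -
  define f where "f = (\<lambda>z. indicator {(b - real c/2)<..<(b - real c/2) + real c} z * h (fr z))"
  define X where "X = (\<integral>\<^sup>+z. indicator {-1/2<..<1/2} z * h z \<partial>lborel)"
  define Y where "Y = (\<integral>\<^sup>+y. indicator {-1/2<..<1/2} y * h (fr (real c * y + b)) \<partial>lborel)"
  have [measurable]: "f \<in> borel_measurable borel" unfolding f_def by measurable
  have e1: "(\<integral>\<^sup>+z. f z \<partial>lborel) = of_nat c * X"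
    unfolding f_def X_def by (rule UIn) fact
  have e2: "(\<integral>\<^sup>+z. f z \<partial>lborel) = ennreal \<bar>real c\<bar> * (\<integral>\<^sup>+y. f (b + real c * y) \<partial>lborel)"
    apply (rule nn_integral_real_affine)
     apply (fact)
    using c by simp
  have e3: "(\<integral>\<^sup>+y. f (b + real c * y) \<partial>lborel) = Y"
    unfolding Y_def
  proof (rule nn_integral_cong)
    fix y
    have cp: "real c > 0" using c by simp
    have e1: "b + real c * y - (b - real c/2) = real c * (y + 1/2)" "b - real c/2 + real c - (b + real c * y) = real c * (1/2 - y)"
      by (simp_all add: algebra_simps)
    have "b - real c/2 < b + real c * y \<longleftrightarrow> 0 < real c * (y + 1/2)" using e1(1) by linarith
    also have "\<dots> \<longleftrightarrow> 0 < y + 1/2" using cp zero_less_mult_iff[of "real c"] by auto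
    also have "\<dots> \<longleftrightarrow> -1/2 < y" by linarith
    finally have i1: "b - real c/2 < b + real c * y \<longleftrightarrow> -1/2 < y" .
    have "b + real c * y < b - real c/2 + real c \<longleftrightarrow> 0 < real c * (1/2 - y)" using e1(2) by linarith
    also have "\<dots> \<longleftrightarrow> 0 < 1/2 - y" using cp zero_less_mult_iff[of "real c"] by auto
    also have "\<dots> \<longleftrightarrow> y < 1/2" by linarith
    finally have i2: "b + real c * y < b - real c/2 + real c \<longleftrightarrow> y < 1/2" .
    have mem: "(b + real c * y \<in> {(b - real c/2)<..<(b - real c/2) + real c}) = (y \<in> {-1/2<..<1/2})"
      using i1 i2 by auto
    have eqn: "b + real c * y = real c * y + b" by simp
    show "f (b + real c * y) = indicator {-1/2<..<1/2} y * h (fr (real c * y + b))"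
      unfolding f_def indicator_def mem unfolding eqn by (rule refl)
  qed
  have "ennreal (real c) * Y = ennreal (real c) * X"
    using e1 e2 e3 by (metis abs_of_nat ennreal_of_nat_eq_real_of_nat)
  moreover have "ennreal (real c) \<noteq> 0" "ennreal (real c) \<noteq> top" using c by auto
  ultimately show ?thesis
    unfolding X_def[symmetric] Y_def[symmetric] by (metis ennreal_mult_divide_eq mult.commute)
qed

lemma scale_int:
  fixes h :: "real \<Rightarrow> ennreal"
  assumes [measurable]: "h \<in> borel_measurable borel" and c: "c \<noteq> 0"
  shows "(\<integral>\<^sup>+y. indicator {-1/2<..<1/2} y * h (fr (real_of_int c * y + b)) \<partial>lborel) = (\<integral>\<^sup>+z. indicator {-1/2<..<1/2} z * h z \<partial>lborel)"
proof (cases "c > 0")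
  case True
  then show ?thesis using scale_pos[OF assms(1), of "nat c" b] by simp
next
  case False
  then have c': "nat (-c) > 0" "real (nat (-c)) = - real_of_int c" using c by auto
  have "(\<integral>\<^sup>+y. indicator {-1/2<..<1/2} y * h (fr (real_of_int c * y + b)) \<partial>lborel)
     = ennreal \<bar>-1\<bar> * (\<integral>\<^sup>+y. indicator {-1/2<..<1/2} (0 + (-1) * y) * h (fr (real_of_int c * (0 + (-1) * y) + b)) \<partial>lborel)"
    by (rule nn_integral_real_affine) auto
  also have "\<dots> = (\<integral>\<^sup>+y. indicator {-1/2<..<1/2} y * h (fr (real (nat (-c)) * y + b)) \<partial>lborel)"
    by (auto simp: c'(2) indicator_def intro!: nn_integral_cong)
  also have "\<dots> = (\<integral>\<^sup>+z. indicator {-1/2<..<1/2} z * h z \<partial>lborel)"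
    by (rule scale_pos) (use c' in auto)
  finally show ?thesis .
qed

definition U :: "real measure" where "U = uniform_measure lborel {-1/2<..<1/2}"

lemma emeasure_I: "emeasure lborel {-1/2<..<1/2::real} = 1" by simp

lemma prob_U: "prob_space U"
  unfolding U_def by (rule prob_space_uniform_measure) auto

lemma sets_U[simp, measurable_cong]: "sets U = sets borel" and space_U[simp]: "space U = UNIV"
  unfolding U_def by auto

lemma nn_integral_U:
  fixes f :: "real \<Rightarrow> ennreal"
  assumes [measurable]: "f \<in> borel_measurable borel"
  shows "(\<integral>\<^sup>+x. f x \<partial>U) = (\<integral>\<^sup>+x. indicator {-1/2<..<1/2} x * f x \<partial>lborel)"
  unfolding U_def by (subst nn_integral_uniform_measure) (auto simp: mult.commute divide_ennreal_def)

lemma U_shift: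
  fixes h :: "real \<Rightarrow> ennreal"
  assumes [measurable]: "h \<in> borel_measurable borel" and c: "c \<noteq> 0"
  shows "(\<integral>\<^sup>+y. h (fr (real_of_int c * y + b)) \<partial>U) = (\<integral>\<^sup>+y. h y \<partial>U)"
proof -
  have "(\<integral>\<^sup>+y. h (fr (real_of_int c * y + b)) \<partial>U) = (\<integral>\<^sup>+y. indicator {-1/2<..<1/2} y * h (fr (real_of_int c * y + b)) \<partial>lborel)"
    by (rule nn_integral_U) measurable
  then show ?thesis using scale_int[OF assms, of b] nn_integral_U[OF assms(1)] by simp
qed

interpretation UP: product_sigma_finite "\<lambda>_::nat. U"
  by (simp add: product_sigma_finite_def prob_U prob_space_imp_sigma_finite)

lemma prob_mu: "prob_space (PiM I (\<lambda>_. U))"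
  by (rule prob_space_PiM) (rule prob_U)

interpretation LP: product_sigma_finite "\<lambda>_::nat. (lborel::real measure)"
  by (simp add: product_sigma_finite_def sigma_finite_lborel)

abbreviation \<mu> :: "nat \<Rightarrow> (nat \<Rightarrow> real) measure" where "\<mu> n \<equiv> PiM {..<n} (\<lambda>_. U)"

lemma sets_mu_cong: "sets (PiM I (\<lambda>_. U)) = sets (PiM I (\<lambda>_. lborel))"
  by (rule sets_PiM_cong) auto

lemma restrict_meas: "k \<le> n \<Longrightarrow> (\<lambda>x. restrict x {..<k}) \<in> measurable (\<mu> n) (\<mu> k)"
  by (rule measurable_restrict_subset) auto

lemma tri:
  fixes m :: nat and c :: "nat \<Rightarrow> int" and g :: "nat \<Rightarrow> (nat \<Rightarrow> real) \<Rightarrow> real" and A :: "nat \<Rightarrow> real set"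
  assumes c: "\<And>k. c k \<noteq> 0"
  and g: "\<And>k. g k \<in> borel_measurable (\<mu> (m+k))"
  and A: "\<And>k. A k \<in> sets borel"
  defines "T \<equiv> \<lambda>k x. fr (of_int (c k) * x (m+k) + g k (restrict x {..<m+k}))"
  shows "(\<integral>\<^sup>+x. (\<Prod>k<n. indicator (A k) (T k x)) \<partial>\<mu> (m+n)) = (\<Prod>k<n. emeasure U (A k))"
proof (induction n)
  case 0
  then show ?case using prob_space.emeasure_space_1[OF prob_mu, of "{..<m}"] by simp
next
  case (Suc n)
  have Tm: "(\<lambda>x. T k x) \<in> borel_measurable (\<mu> N)" if "k < N - m" "m \<le> N" for k N
  proof -
    have [measurable]: "(\<lambda>x. g k (restrict x {..<m+k})) \<in> borel_measurable (\<mu> N)"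
      using measurable_comp[OF restrict_meas[of "m+k" N] g[of k]] that by (simp add: comp_def)
    have "(\<lambda>x. x (m+k)) \<in> measurable (\<mu> N) U"
      using that by (intro measurable_component_singleton) auto
    then have [measurable]: "(\<lambda>x. x (m+k)) \<in> borel_measurable (\<mu> N)"
      using measurable_cong_sets[OF refl sets_U] by blast
    show ?thesis unfolding T_def by measurable
  qed
  have Fm: "(\<lambda>x. \<Prod>k<n'. indicator (A k) (T k x) :: ennreal) \<in> borel_measurable (\<mu> (m+n'))" for n'
    apply (rule borel_measurable_prod_ennreal)
    using Tm[of _ "m+n'"] A by (auto intro!: measurable_compose[OF _ borel_measurable_indicator])
  have ins: "{..<m + Suc n} = insert (m+n) {..<m+n}" by auto
  have upd: "(\<Prod>k<Suc n. indicator (A k) (T k (x(m+n := y))) :: ennreal)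
      = (\<Prod>k<n. indicator (A k) (T k x)) * indicator (A n) (fr (of_int (c n) * y + g n (restrict x {..<m+n})))" for x y
  proof -
    have "T k (x(m+n := y)) = T k x" if "k < n" for k
    proof -
      have "restrict (x(m+n := y)) {..<m+k} = restrict x {..<m+k}" using that by (auto simp: restrict_def)
      then show ?thesis using that unfolding T_def by simp
    qed
    moreover have "restrict (x(m+n := y)) {..<m+n} = restrict x {..<m+n}" by (auto simp: restrict_def)
    ultimately show ?thesis unfolding T_def by simp
  qed
  have "(\<integral>\<^sup>+x. (\<Prod>k<Suc n. indicator (A k) (T k x)) \<partial>\<mu> (m+Suc n))
     = (\<integral>\<^sup>+x. (\<integral>\<^sup>+y. (\<Prod>k<Suc n. indicator (A k) (T k (x(m+n := y)))) \<partial>U) \<partial>\<mu> (m+n))"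
    unfolding ins by (rule UP.product_nn_integral_insert) (use Fm[of "Suc n"] ins in auto)
  also have "\<dots> = (\<integral>\<^sup>+x. (\<Prod>k<n. indicator (A k) (T k x)) * emeasure U (A n) \<partial>\<mu> (m+n))"
  proof (rule nn_integral_cong)
    fix x
    have "(\<integral>\<^sup>+y. (\<Prod>k<Suc n. indicator (A k) (T k (x(m+n := y)))) \<partial>U)
       = (\<integral>\<^sup>+y. (\<Prod>k<n. indicator (A k) (T k x)) * indicator (A n) (fr (of_int (c n) * y + g n (restrict x {..<m+n}))) \<partial>U)"
      unfolding upd ..
    also have "\<dots> = (\<Prod>k<n. indicator (A k) (T k x)) * (\<integral>\<^sup>+y. indicator (A n) (fr (of_int (c n) * y + g n (restrict x {..<m+n}))) \<partial>U)"
      by (rule nn_integral_cmult) (use A in measurable)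
    also have "(\<integral>\<^sup>+y. indicator (A n) (fr (of_int (c n) * y + g n (restrict x {..<m+n}))) \<partial>U) = (\<integral>\<^sup>+y. indicator (A n) y \<partial>U)"
      by (rule U_shift) (use A c in auto)
    also have "\<dots> = emeasure U (A n)" using A by simp
    finally show "(\<integral>\<^sup>+y. (\<Prod>k<Suc n. indicator (A k) (T k (x(m+n := y)))) \<partial>U) = (\<Prod>k<n. indicator (A k) (T k x)) * emeasure U (A n)" .
  qed
  also have "\<dots> = (\<integral>\<^sup>+x. (\<Prod>k<n. indicator (A k) (T k x)) \<partial>\<mu> (m+n)) * emeasure U (A n)"
    by (rule nn_integral_multc) (rule Fm)
  also have "\<dots> = (\<Prod>k<Suc n. emeasure U (A k))" by (simp add: Suc)
  finally show ?case .
qed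

lemma Tm_gen:
  fixes m :: nat and c :: "nat \<Rightarrow> int" and g :: "nat \<Rightarrow> (nat \<Rightarrow> real) \<Rightarrow> real"
  assumes g: "\<And>k. g k \<in> borel_measurable (\<mu> (m+k))" and "k < n"
  shows "(\<lambda>x. fr (of_int (c k) * x (m+k) + g k (restrict x {..<m+k}))) \<in> measurable (\<mu> (m+n)) U"
proof -
  have [measurable]: "(\<lambda>x. g k (restrict x {..<m+k})) \<in> borel_measurable (\<mu> (m+n))"
    using measurable_comp[OF restrict_meas[of "m+k" "m+n"] g[of k]] assms(2) by (simp add: comp_def)
  have "(\<lambda>x. x (m+k)) \<in> measurable (\<mu> (m+n)) U"
    using assms(2) by (intro measurable_component_singleton) auto
  then have [measurable]: "(\<lambda>x. x (m+k)) \<in> borel_measurable (\<mu> (m+n))"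
    using measurable_cong_sets[OF refl sets_U] by blast
  have "(\<lambda>x. fr (of_int (c k) * x (m+k) + g k (restrict x {..<m+k}))) \<in> borel_measurable (\<mu> (m+n))"
    by measurable
  then show ?thesis using measurable_cong_sets[OF refl sets_U] by blast
qed

lemma tri_distr:
  fixes m :: nat and c :: "nat \<Rightarrow> int" and g :: "nat \<Rightarrow> (nat \<Rightarrow> real) \<Rightarrow> real"
  assumes c: "\<And>k. c k \<noteq> 0"
  and g: "\<And>k. g k \<in> borel_measurable (\<mu> (m+k))"
  defines "T \<equiv> (\<lambda>k x. fr (of_int (c k) * x (m+k) + g k (restrict x {..<m+k})))"
  shows "distr (\<mu> (m+n)) (\<mu> n) (\<lambda>x. \<lambda>k\<in>{..<n}. T k x) = \<mu> n"
proof -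
  have meas: "(\<lambda>x. \<lambda>k\<in>{..<n}. T k x) \<in> measurable (\<mu> (m+n)) (\<mu> n)"
    unfolding T_def by (rule measurable_restrict) (rule Tm_gen[OF g], simp)
  show ?thesis
  proof (rule UP.PiM_eqI)
    fix A assume A: "\<And>i. i \<in> {..<n} \<Longrightarrow> A i \<in> sets U"
    define A' where "A' k = (if k < n then A k else {})" for k
    have A': "A' k \<in> sets borel" for k using A unfolding A'_def by auto
    have "emeasure (distr (\<mu> (m+n)) (\<mu> n) (\<lambda>x. \<lambda>k\<in>{..<n}. T k x)) (Pi\<^sub>E {..<n} A)
       = emeasure (\<mu> (m+n)) ((\<lambda>x. \<lambda>k\<in>{..<n}. T k x) -` Pi\<^sub>E {..<n} A \<inter> space (\<mu> (m+n)))"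
      by (rule emeasure_distr[OF meas]) (use A in \<open>auto intro: sets_PiM_I_finite\<close>)
    also have "\<dots> = (\<integral>\<^sup>+x. indicator ((\<lambda>x. \<lambda>k\<in>{..<n}. T k x) -` Pi\<^sub>E {..<n} A \<inter> space (\<mu> (m+n))) x \<partial>\<mu> (m+n))"
      by (rule nn_integral_indicator[symmetric]) (use meas A in \<open>auto intro: sets_PiM_I_finite measurable_sets\<close>)
    also have "\<dots> = (\<integral>\<^sup>+x. (\<Prod>k<n. indicator (A' k) (T k x)) \<partial>\<mu> (m+n))"
    proof (rule nn_integral_cong)
      fix x assume "x \<in> space (\<mu> (m+n))"
      show "indicator ((\<lambda>x. \<lambda>k\<in>{..<n}. T k x) -` Pi\<^sub>E {..<n} A \<inter> space (\<mu> (m+n))) x = (\<Prod>k<n. indicator (A' k) (T k x) :: ennreal)"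
      proof (cases "\<forall>k<n. T k x \<in> A k")
        case True
        then show ?thesis using \<open>x \<in> space (\<mu> (m+n))\<close> unfolding A'_def
          by (auto simp: indicator_def PiE_iff intro!: prod.neutral)
      next
        case False
        then obtain k where "k < n" "T k x \<notin> A k" by auto
        then have "(\<Prod>k<n. indicator (A' k) (T k x) :: ennreal) = 0"
          unfolding A'_def by (intro prod_zero) (auto intro!: bexI[of _ k])
        then show ?thesis using \<open>k < n\<close> \<open>T k x \<notin> A k\<close> by (auto simp: indicator_def PiE_iff)
      qed
    qed
    also have "\<dots> = (\<Prod>k<n. emeasure U (A' k))"
      unfolding T_def by (rule tri[OF c g A'])
    also have "\<dots> = (\<Prod>k\<in>{..<n}. emeasure U (A k))"
      unfolding A'_def by (rule prod.cong) auto
    finally show "emeasure (distr (\<mu> (m+n)) (\<mu> n) (\<lambda>x. \<lambda>k\<in>{..<n}. T k x)) (Pi\<^sub>E {..<n} A) = (\<Prod>k\<in>{..<n}. emeasure U (A k))" .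
  qed simp_all
qed

lemma comp_meas: "j < N \<Longrightarrow> (\<lambda>z. z j) \<in> borel_measurable (\<mu> N)"
proof -
  assume "j < N"
  then have "(\<lambda>x. x j) \<in> measurable (\<mu> N) U" by (intro measurable_component_singleton) auto
  then show ?thesis using measurable_cong_sets[OF refl sets_U] by blast
qed

lemma borel_to_U: "f \<in> borel_measurable M \<Longrightarrow> f \<in> measurable M U"
  using measurable_cong_sets[OF refl sets_U] by blast

definition Phi :: "nat \<Rightarrow> int \<Rightarrow> (nat \<Rightarrow> int) \<Rightarrow> (nat \<Rightarrow> real) \<Rightarrow> nat \<Rightarrow> real" where
  "Phi N K d z = (\<lambda>i\<in>{..<N}. if i = 0 then fr (of_int K * z 0 + (\<Sum>j\<in>{1..<N}. of_int (d j) * z j)) else z i)"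

lemma Phi_sum_meas: "(\<lambda>z. (\<Sum>j\<in>{1..<N}. of_int (d j) * z j)) \<in> borel_measurable (\<mu> N)"
  by (rule borel_measurable_sum) (auto intro!: borel_measurable_times comp_meas)

lemma Phi_meas: "Phi N K d \<in> measurable (\<mu> N) (\<mu> N)"
  unfolding Phi_def
proof (rule measurable_restrict)
  fix i assume i: "i \<in> {..<N}"
  have [measurable]: "(\<lambda>z. z 0) \<in> borel_measurable (\<mu> N)" "(\<lambda>z. z i) \<in> borel_measurable (\<mu> N)"
    using i by (auto intro!: comp_meas)
  note Phi_sum_meas[measurable]
  show "(\<lambda>z. if i = 0 then fr (of_int K * z 0 + (\<Sum>j\<in>{1..<N}. of_int (d j) * z j)) else z i) \<in> measurable (\<mu> N) U"
    by (rule borel_to_U) measurable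
qed

lemma Phi_distr:
  assumes N: "N \<ge> 1" and K: "K \<noteq> 0"
  shows "distr (\<mu> N) (\<mu> N) (Phi N K d) = \<mu> N"
proof (rule UP.PiM_eqI)
  fix A assume A: "\<And>i. i \<in> {..<N} \<Longrightarrow> A i \<in> sets U"
  have Ab: "\<And>i. i < N \<Longrightarrow> A i \<in> sets borel" using A by auto
  define I where "I = {1..<N}"
  have ins: "{..<N} = insert 0 I" "0 \<notin> I" "finite I" using N unfolding I_def by auto
  define F where "F = (\<lambda>z. (\<Prod>i<N. indicator (A i) (Phi N K d z i)) :: ennreal)"
  have Fm: "F \<in> borel_measurable (\<mu> N)"
    unfolding F_def
    by (rule borel_measurable_prod_ennreal)
       (auto intro!: measurable_compose[OF _ borel_measurable_indicator] Ab
             measurable_compose[OF Phi_meas comp_meas] simp: comp_def)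
  have "emeasure (distr (\<mu> N) (\<mu> N) (Phi N K d)) (Pi\<^sub>E {..<N} A)
     = emeasure (\<mu> N) (Phi N K d -` Pi\<^sub>E {..<N} A \<inter> space (\<mu> N))"
    by (rule emeasure_distr[OF Phi_meas]) (use A in \<open>auto intro: sets_PiM_I_finite\<close>)
  also have "\<dots> = (\<integral>\<^sup>+z. indicator (Phi N K d -` Pi\<^sub>E {..<N} A \<inter> space (\<mu> N)) z \<partial>\<mu> N)"
    by (rule nn_integral_indicator[symmetric]) (use Phi_meas A in \<open>auto intro: sets_PiM_I_finite measurable_sets\<close>)
  also have "\<dots> = (\<integral>\<^sup>+z. F z \<partial>\<mu> N)"
  proof (rule nn_integral_cong)
    fix z assume z: "z \<in> space (\<mu> N)"
    show "indicator (Phi N K d -` Pi\<^sub>E {..<N} A \<inter> space (\<mu> N)) z = F z"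
    proof (cases "\<forall>i<N. Phi N K d z i \<in> A i")
      case True
      then have "Phi N K d z \<in> Pi\<^sub>E {..<N} A" by (auto simp: Phi_def PiE_iff)
      then show ?thesis using True z unfolding F_def by (auto simp: indicator_def intro!: prod.neutral)
    next
      case False
      then obtain k where "k < N" "Phi N K d z k \<notin> A k" by auto
      then have "F z = 0"
        unfolding F_def by (intro prod_zero) (auto intro!: bexI[of _ k])
      then show ?thesis using \<open>k < N\<close> \<open>Phi N K d z k \<notin> A k\<close> by (auto simp: indicator_def PiE_iff)
    qed
  qed
  also have "\<dots> = (\<integral>\<^sup>+x. (\<integral>\<^sup>+y. F (x(0 := y)) \<partial>U) \<partial>PiM I (\<lambda>_. U))"
    unfolding ins(1) by (rule UP.product_nn_integral_insert) (use Fm ins in auto)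
  also have "\<dots> = (\<integral>\<^sup>+x. (\<Prod>i\<in>I. indicator (A i) (x i)) * emeasure U (A 0) \<partial>PiM I (\<lambda>_. U))"
  proof (rule nn_integral_cong)
    fix x
    have eq: "F (x(0 := y)) = (\<Prod>i\<in>I. indicator (A i) (x i)) *
        indicator (A 0) (fr (of_int K * y + (\<Sum>j\<in>I. of_int (d j) * x j)))" for y
    proof -
      have s: "(\<Sum>j\<in>I. of_int (d j) * (x(0 := y)) j) = (\<Sum>j\<in>I. of_int (d j) * x j)"
        using ins(2) by (intro sum.cong) auto
      have "F (x(0 := y)) = indicator (A 0) (Phi N K d (x(0 := y)) 0) * (\<Prod>i\<in>I. indicator (A i) (Phi N K d (x(0 := y)) i))"
        unfolding F_def ins(1) using ins by (simp add: prod.insert)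
      also have "(\<Prod>i\<in>I. indicator (A i) (Phi N K d (x(0 := y)) i)) = (\<Prod>i\<in>I. indicator (A i) (x i))"
        using ins by (intro prod.cong) (auto simp: Phi_def I_def)
      also have "Phi N K d (x(0 := y)) 0 = fr (of_int K * y + (\<Sum>j\<in>I. of_int (d j) * x j))"
        using N s unfolding Phi_def I_def by simp
      finally show ?thesis by (metis mult.commute)
    qed
    have "(\<integral>\<^sup>+y. F (x(0 := y)) \<partial>U) = (\<Prod>i\<in>I. indicator (A i) (x i)) *
        (\<integral>\<^sup>+y. indicator (A 0) (fr (of_int K * y + (\<Sum>j\<in>I. of_int (d j) * x j))) \<partial>U)"
    proof -
      have [measurable]: "A 0 \<in> sets borel" using Ab N by auto
      show ?thesis unfolding eq by (rule nn_integral_cmult) measurable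
    qed
    also have "(\<integral>\<^sup>+y. indicator (A 0) (fr (of_int K * y + (\<Sum>j\<in>I. of_int (d j) * x j))) \<partial>U) = (\<integral>\<^sup>+y. indicator (A 0) y \<partial>U)"
      by (rule U_shift) (use A[of 0] N K in auto)
    also have "\<dots> = emeasure U (A 0)" using A[of 0] N by simp
    finally show "(\<integral>\<^sup>+y. F (x(0 := y)) \<partial>U) = (\<Prod>i\<in>I. indicator (A i) (x i)) * emeasure U (A 0)" .
  qed
  also have "\<dots> = (\<integral>\<^sup>+x. (\<Prod>i\<in>I. indicator (A i) (x i)) \<partial>PiM I (\<lambda>_. U)) * emeasure U (A 0)"
    by (rule nn_integral_multc)
       (use A ins in \<open>auto intro!: borel_measurable_prod_ennreal measurable_compose[OF _ borel_measurable_indicator] comp_meas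
          measurable_compose[OF measurable_component_singleton[of _ I "\<lambda>_. U"]]\<close>)
  also have "(\<integral>\<^sup>+x. (\<Prod>i\<in>I. indicator (A i) (x i)) \<partial>PiM I (\<lambda>_. U)) = (\<Prod>i\<in>I. emeasure U (A i))"
  proof -
    have "(\<integral>\<^sup>+x. (\<Prod>i\<in>I. indicator (A i) (x i)) \<partial>PiM I (\<lambda>_. U)) = (\<Prod>i\<in>I. integral\<^sup>N U (indicator (A i)))"
      by (rule UP.product_nn_integral_prod) (use A ins in auto)
    also have "\<dots> = (\<Prod>i\<in>I. emeasure U (A i))"
      using A ins by (intro prod.cong) auto
    finally show ?thesis .
  qed
  also have "(\<Prod>i\<in>I. emeasure U (A i)) * emeasure U (A 0) = (\<Prod>i\<in>{..<N}. emeasure U (A i))"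
    unfolding ins(1) using ins by (simp add: prod.insert mult.commute)
  finally show "emeasure (distr (\<mu> N) (\<mu> N) (Phi N K d)) (Pi\<^sub>E {..<N} A) = (\<Prod>i\<in>{..<N}. emeasure U (A i))" .
qed simp_all

lemma tele: fixes x :: "nat \<Rightarrow> real" and n :: nat shows "(\<Sum>j\<in>{1..<n+1}. (x (j-1) - 2 * x j + x (j+1) :: real)) = (x (n+1) - x n) - (x 1 - x 0)"
  by (induction n) (auto simp: algebra_simps)

lemma lap_ident: fixes x :: "nat \<Rightarrow> real" and n :: nat shows "(real n + 2) * (x 1 - x 0) + (\<Sum>j\<in>{1..<n+1}. (real n + 1 - real j) * (x (j-1) - 2 * x j + x (j+1)))
   = x (n+1) - 2 * x 0 + (x 1 :: real)"
proof (induction n)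
  case 0
  then show ?case by simp
next
  case (Suc n)
  have "(\<Sum>j\<in>{1..<Suc n+1}. (real (Suc n) + 1 - real j) * (x (j-1) - 2 * x j + x (j+1)))
     = (\<Sum>j\<in>{1..<n+1}. (real (Suc n) + 1 - real j) * (x (j-1) - 2 * x j + x (j+1))) + (x n - 2 * x (n+1) + x (n+2))"
    by simp
  also have "(\<Sum>j\<in>{1..<n+1}. (real (Suc n) + 1 - real j) * (x (j-1) - 2 * x j + x (j+1)))
     = (\<Sum>j\<in>{1..<n+1}. (real n + 1 - real j) * (x (j-1) - 2 * x j + x (j+1))) + (\<Sum>j\<in>{1..<n+1}. (x (j-1) - 2 * x j + x (j+1)))"
    by (simp add: sum.distrib[symmetric] algebra_simps)
  finally show ?case using Suc tele[of x n] by (simp add: algebra_simps)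
qed

lemma sum_shift1: "(\<Sum>i<Suc M. f ((i + 1) mod Suc M)) = (\<Sum>i<Suc M. (f i :: real))"
proof -
  have "(\<Sum>i<Suc M. f ((i + 1) mod Suc M)) = (\<Sum>i<M. f ((i + 1) mod Suc M)) + f 0" by simp
  also have "(\<Sum>i<M. f ((i + 1) mod Suc M)) = (\<Sum>i<M. f (Suc i))" by (intro sum.cong) auto
  finally show ?thesis using sum.lessThan_Suc_shift[of f M] by simp
qed

lemma sum_shiftm1: "(\<Sum>i<Suc M. f ((i + M) mod Suc M)) = (\<Sum>i<Suc M. (f i :: real))"
proof -
  have "(\<Sum>i<Suc M. f ((i + M) mod Suc M)) = f (M mod Suc M) + (\<Sum>i<M. f ((Suc i + M) mod Suc M))"
    by (subst sum.lessThan_Suc_shift) simp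
  also have "(\<Sum>i<M. f ((Suc i + M) mod Suc M)) = (\<Sum>i<M. f i)"
  proof (intro sum.cong refl)
    fix i assume "i \<in> {..<M}"
    then have "(Suc i + M) mod Suc M = i" by (metis add.commute add_Suc_right lessThan_iff less_SucI mod_add_self1 mod_less)
    then show "f ((Suc i + M) mod Suc M) = f i" by simp
  qed
  finally show ?thesis by simp
qed

lemma sum_lap: "L \<ge> 1 \<Longrightarrow> (\<Sum>i<L. lap L a i) = 0"
proof -
  assume "L \<ge> 1"
  then obtain M where L: "L = Suc M" by (cases L) auto
  have "(\<Sum>i<L. lap L a i) = (\<Sum>i<L. a ((i + L - 1) mod L)) - 2 * (\<Sum>i<L. a (i mod L)) + (\<Sum>i<L. a ((i + 1) mod L))"
    unfolding lap_def by (simp add: sum.distrib sum_subtractf sum_distrib_left)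
  also have "(\<Sum>i<L. a (i mod L)) = (\<Sum>i<L. a i)" by (intro sum.cong) auto
  moreover have "(\<Sum>i<L. a ((i + L - 1) mod L)) = (\<Sum>i<L. a i)" unfolding L using sum_shiftm1[of a M] by simp
  moreover have "(\<Sum>i<L. a ((i + 1) mod L)) = (\<Sum>i<L. a i)" unfolding L by (rule sum_shift1)
  ultimately show ?thesis by simp
qed

definition Gm :: "nat \<Rightarrow> (nat \<Rightarrow> real) \<Rightarrow> nat \<Rightarrow> real" where
  "Gm L y = (\<lambda>i\<in>{..<L}. if i < L - 1 then y i else fr (- (\<Sum>j<L-1. y j)))"

definition Ym :: "nat \<Rightarrow> (nat \<Rightarrow> real) \<Rightarrow> nat \<Rightarrow> real" where
  "Ym L a = (\<lambda>i\<in>{..<L-1}. fr (lap L a i))"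

lemma omega_G: assumes "L \<ge> 1" shows "omega L a = Gm L (Ym L a)"
proof -
  have "omega L a i = Gm L (Ym L a) i" for i
  proof (cases "i < L")
    case True
    show ?thesis
    proof (cases "i < L - 1")
      case True
      then show ?thesis using \<open>i < L\<close> by (simp add: omega_def Gm_def Ym_def fr_def)
    next
      case False
      then have i: "i = L - 1" using \<open>i < L\<close> by auto
      have s: "(\<Sum>j<L. lap L a j) = (\<Sum>j<L-1. lap L a j) + lap L a (L-1)"
        using assms by (metis Suc_diff_1 less_le_trans sum.lessThan_Suc zero_less_one)
      have "lap L a (L-1) = - (\<Sum>j<L-1. lap L a j)" using s sum_lap[OF assms, of a] by simp
      moreover have "(\<Sum>j<L-1. Ym L a j) = (\<Sum>j<L-1. lap L a j) - (\<Sum>j<L-1. of_int (round (lap L a j)))"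
        unfolding Ym_def fr_def by (simp add: sum_subtractf)
      ultimately have "fr (lap L a (L-1)) = fr (- (\<Sum>j<L-1. Ym L a j))"
        by (intro fr_cong[where n="- (\<Sum>j<L-1. round (lap L a j))"]) simp
      then show ?thesis using i assms by (simp add: omega_def Gm_def fr_def)
    qed
  next
    case False
    then show ?thesis by (simp add: omega_def Gm_def)
  qed
  then show ?thesis by auto
qed

definition gZ :: "nat \<Rightarrow> (nat \<Rightarrow> real) \<Rightarrow> real" where
  "gZ k x = (if k = 0 then - x 0 else x (k-1) - 2 * x k)"

definition Zm :: "nat \<Rightarrow> (nat \<Rightarrow> real) \<Rightarrow> nat \<Rightarrow> real" where
  "Zm N x = (\<lambda>k\<in>{..<N}. fr (of_int 1 * x (1+k) + gZ k (restrict x {..<1+k})))"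

lemma gZ_meas: "gZ k \<in> borel_measurable (\<mu> (1+k))"
proof -
  have [measurable]: "(\<lambda>x. x 0) \<in> borel_measurable (\<mu> (1+k))" "(\<lambda>x. x k) \<in> borel_measurable (\<mu> (1+k))"
    "(\<lambda>x. x (k-1)) \<in> borel_measurable (\<mu> (1+k))"
    by (auto intro!: comp_meas)
  show ?thesis unfolding gZ_def by measurable
qed

lemma gZ_meas': "gZ k \<in> borel_measurable (\<mu> (Suc k))" using gZ_meas[of k] by simp

lemma Zm_distr: "distr (\<mu> (1+N)) (\<mu> N) (Zm N) = \<mu> N"
  unfolding Zm_def by (rule tri_distr[where c="\<lambda>_. 1"]) (auto intro: gZ_meas gZ_meas')

lemma Zm_meas: "Zm N \<in> measurable (\<mu> (1+N)) (\<mu> N)"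
  unfolding Zm_def by (rule measurable_restrict, rule Tm_gen[where c="\<lambda>_. 1"]) (auto intro: gZ_meas gZ_meas')

lemma Ym_Phi:
  assumes L: "L \<ge> 2"
  shows "Ym L a = Phi (L-1) (int L) (\<lambda>j. int L - 1 - int j) (Zm (L-1) a)"
proof -
  have "Ym L a i = Phi (L-1) (int L) (\<lambda>j. int L - 1 - int j) (Zm (L-1) a) i" for i
  proof (cases "i < L - 1")
    case False
    then show ?thesis by (simp add: Ym_def Phi_def)
  next
    case True
    have lapj: "lap L a j = a (j-1) - 2 * a j + a (j+1)" if "1 \<le> j" "j < L - 1" for j
    proof -
      have e: "j + L - 1 = (j - 1) + L" using that by simp
      have "(j + L - 1) mod L = ((j - 1) + L) mod L" by (simp only: e)
      also have "\<dots> = (j - 1) mod L" by (rule mod_add_self2)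
      also have "\<dots> = j - 1" using that by (intro mod_less) simp
      finally have "(j + L - 1) mod L = j - 1" .
      moreover have "j mod L = j" "(j+1) mod L = j + 1" using that by auto
      ultimately show ?thesis unfolding lap_def by simp
    qed
    have Zj: "Zm (L-1) a j = fr (lap L a j)" if "1 \<le> j" "j < L - 1" for j
    proof -
      have r: "restrict a {..<1+j} (j-1) = a (j-1)" "restrict a {..<1+j} j = a j" by auto
      have "Zm (L-1) a j = fr (of_int 1 * a (1+j) + gZ j (restrict a {..<1+j}))"
        using that unfolding Zm_def by simp
      also have "gZ j (restrict a {..<1+j}) = a (j-1) - 2 * a j" using that r unfolding gZ_def by simp
      also have "of_int 1 * a (1+j) + (a (j-1) - 2 * a j) = lap L a j" using lapj[OF that] by simp
      finally show ?thesis .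
    qed
    show ?thesis
    proof (cases "i = 0")
      case False
      then show ?thesis using True Zj[of i] by (simp add: Ym_def Phi_def)
    next
      case i0: True
      have Z0: "Zm (L-1) a 0 = fr (a 1 - a 0)" using L by (simp add: Zm_def gZ_def)
      have lap0: "lap L a 0 = a (L-1) - 2 * a 0 + a 1"
      proof -
        have "(0 + L - 1) mod L = L - 1" "0 mod L = 0" "(0+1) mod L = 1" using L by auto
        then show ?thesis unfolding lap_def by simp
      qed
      obtain n where n: "L = n + 2" using L by (metis add.commute le_Suc_ex)
      have ident: "real L * (a 1 - a 0) + (\<Sum>j\<in>{1..<L-1}. of_int (int L - 1 - int j) * (lap L a j)) = lap L a 0"
      proof -
        have se: "(\<Sum>j\<in>{1..<L-1}. of_int (int L - 1 - int j) * (lap L a j))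
           = (\<Sum>j\<in>{1..<n+1}. (real n + 1 - real j) * (a (j-1) - 2 * a j + a (j+1)))"
          using lapj n by (intro sum.cong) auto
        have e2: "real L * (a 1 - a 0) = (real n + 2) * (a 1 - a 0)" using n by simp
        have e3: "a (L-1) = a (n+1)" using n by simp
        show ?thesis using se e2 e3 lap_ident[where x=a and n=n] lap0 by linarith
      qed
      have "Phi (L-1) (int L) (\<lambda>j. int L - 1 - int j) (Zm (L-1) a) 0
         = fr (of_int (int L) * fr (a 1 - a 0) + (\<Sum>j\<in>{1..<L-1}. of_int (int L - 1 - int j) * fr (lap L a j)))"
        using L Z0 Zj by (simp add: Phi_def)
      also have "\<dots> = fr (lap L a 0)"
      proof (rule fr_cong[where n="- (int L * round (a 1 - a 0) + (\<Sum>j\<in>{1..<L-1}. (int L - 1 - int j) * round (lap L a j)))"])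
        show "of_int (int L) * fr (a 1 - a 0) + (\<Sum>j\<in>{1..<L-1}. of_int (int L - 1 - int j) * fr (lap L a j)) - lap L a 0 =
          of_int (- (int L * round (a 1 - a 0) + (\<Sum>j\<in>{1..<L-1}. (int L - 1 - int j) * round (lap L a j))))"
          unfolding ident[symmetric] fr_def by (simp add: algebra_simps sum.distrib sum_subtractf)
      qed
      finally show ?thesis using i0 True by (simp add: Ym_def)
    qed
  qed
  then show ?thesis by auto
qed

lemma Ym_distr:
  assumes L: "L \<ge> 1"
  shows "distr (\<mu> L) (\<mu> (L-1)) (Ym L) = \<mu> (L-1)" and "Ym L \<in> measurable (\<mu> L) (\<mu> (L-1))"
proof -
  have L1: "L = 1 + (L - 1)" using L by simp
  have "distr (\<mu> L) (\<mu> (L-1)) (Ym L) = \<mu> (L-1) \<and> Ym L \<in> measurable (\<mu> L) (\<mu> (L-1))"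
  proof (cases "L = 1")
    case True
    then have "Ym L = Zm (L-1)" by (intro ext) (simp add: Ym_def Zm_def)
    then show ?thesis using Zm_distr[of "L-1"] Zm_meas[of "L-1"] L1 by metis
  next
    case False
    then have L2: "L \<ge> 2" using L by auto
    have e: "Ym L = (\<lambda>a. Phi (L-1) (int L) (\<lambda>j. int L - 1 - int j) (Zm (L-1) a))"
      using Ym_Phi[OF L2] by auto
    have zm: "Zm (L-1) \<in> measurable (\<mu> L) (\<mu> (L-1))" using Zm_meas[of "L-1"] L1 by metis
    have zd: "distr (\<mu> L) (\<mu> (L-1)) (Zm (L-1)) = \<mu> (L-1)" using Zm_distr[of "L-1"] L1 by metis
    have m: "Ym L \<in> measurable (\<mu> L) (\<mu> (L-1))"
      unfolding e using measurable_comp[OF zm Phi_meas] by (simp add: comp_def)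
    have "distr (\<mu> L) (\<mu> (L-1)) (Ym L) = distr (distr (\<mu> L) (\<mu> (L-1)) (Zm (L-1))) (\<mu> (L-1)) (Phi (L-1) (int L) (\<lambda>j. int L - 1 - int j))"
      unfolding e by (rule distr_distr[OF Phi_meas zm, unfolded comp_def, symmetric])
    also have "\<dots> = \<mu> (L-1)" unfolding zd by (rule Phi_distr) (use L2 in auto)
    finally show ?thesis using m by simp
  qed
  then show "distr (\<mu> L) (\<mu> (L-1)) (Ym L) = \<mu> (L-1)" "Ym L \<in> measurable (\<mu> L) (\<mu> (L-1))" by auto
qed

abbreviation \<Lambda> :: "nat \<Rightarrow> (nat \<Rightarrow> real) measure" where "\<Lambda> n \<equiv> PiM {..<n} (\<lambda>_. lborel)"

definition cubeN :: "nat \<Rightarrow> (nat \<Rightarrow> real) set" where "cubeN n = PiE {..<n} (\<lambda>_. {-1/2<..<1/2})"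

lemma cubeN_sets: "cubeN n \<in> sets (\<Lambda> n)" unfolding cubeN_def by (rule sets_PiM_I_finite) auto

lemma space_mu: "space (\<mu> n) = space (\<Lambda> n)" by (simp add: space_PiM)

lemma sets_mu: "sets (\<mu> n) = sets (\<Lambda> n)" by (rule sets_mu_cong)

lemma LU:
  assumes E: "E \<in> sets (\<Lambda> n)" and sub: "E \<subseteq> cubeN n"
  shows "emeasure (\<Lambda> n) E = emeasure (\<mu> n) E"
proof -
  have D: "density (\<Lambda> n) (indicator (cubeN n)) = \<mu> n"
  proof (rule UP.PiM_eqI)
    fix A assume A: "\<And>i. i \<in> {..<n} \<Longrightarrow> A i \<in> sets U"
    have "emeasure (density (\<Lambda> n) (indicator (cubeN n))) (Pi\<^sub>E {..<n} A) = emeasure (\<Lambda> n) (cubeN n \<inter> Pi\<^sub>E {..<n} A)"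
      by (rule emeasure_restricted[OF cubeN_sets]) (use A in \<open>auto intro!: sets_PiM_I_finite\<close>)
    also have "cubeN n \<inter> Pi\<^sub>E {..<n} A = Pi\<^sub>E {..<n} (\<lambda>i. {-1/2<..<1/2} \<inter> A i)"
      unfolding cubeN_def by auto
    also have "emeasure (\<Lambda> n) \<dots> = (\<Prod>i\<in>{..<n}. emeasure lborel ({-1/2<..<1/2} \<inter> A i))"
      by (rule LP.emeasure_PiM) (use A in auto)
    also have "\<dots> = (\<Prod>i\<in>{..<n}. emeasure U (A i))"
      using A by (intro prod.cong) (auto simp: U_def divide_ennreal_def)
    finally show "emeasure (density (\<Lambda> n) (indicator (cubeN n))) (Pi\<^sub>E {..<n} A) = (\<Prod>i\<in>{..<n}. emeasure U (A i))" .
  qed (auto simp: sets_mu)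
  have "emeasure (\<mu> n) E = emeasure (\<Lambda> n) (cubeN n \<inter> E)"
    unfolding D[symmetric] by (rule emeasure_restricted[OF cubeN_sets E])
  then show ?thesis using sub by (simp add: Int_absorb1)
qed

lemma mu_cube_AE: "AE y in \<mu> n. y \<in> cubeN n"
proof (rule AE_I[where N="space (\<mu> n) - cubeN n"])
  show "{x \<in> space (\<mu> n). x \<notin> cubeN n} \<subseteq> space (\<mu> n) - cubeN n" by auto
  have cs: "cubeN n \<in> sets (\<mu> n)" using cubeN_sets sets_mu by blast
  have "emeasure (\<mu> n) (cubeN n) = (\<Prod>i\<in>{..<n}. emeasure U {-1/2<..<1/2})"
    unfolding cubeN_def by (rule UP.emeasure_PiM) auto
  also have "\<dots> = 1" by (simp add: U_def)
  finally have c1: "emeasure (\<mu> n) (cubeN n) = 1" .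
  show "emeasure (\<mu> n) (space (\<mu> n) - cubeN n) = 0"
    using emeasure_compl[OF cs] c1 prob_space.emeasure_space_1[OF prob_mu[of "{..<n}"]] by simp
  show "space (\<mu> n) - cubeN n \<in> sets (\<mu> n)" using cs by auto
qed

lemma sum_meas: "(\<lambda>y. \<Sum>j<n. y j) \<in> borel_measurable (\<mu> n)"
  by (rule borel_measurable_sum) (auto intro: comp_meas)

lemma null_half: "AE y in \<mu> n. fr (- (\<Sum>j<n. y j)) \<noteq> -1/2"
proof (cases "n = 0")
  case True
  then show ?thesis by (simp add: fr_def)
next
  case False
  define Ph where "Ph = Phi n (-1) (\<lambda>_. -1)"
  have ph0: "Ph y 0 = fr (- (\<Sum>j<n. y j))" for y
  proof -
    have "{..<n} = insert 0 {1..<n}" using False by auto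
    then have "(\<Sum>j<n. y j) = y 0 + (\<Sum>j\<in>{1..<n}. y j)" by simp
    then show ?thesis using False unfolding Ph_def Phi_def by (simp add: sum_negf)
  qed
  define B where "B = Pi\<^sub>E {..<n} (\<lambda>i. if i = 0 then {-1/2::real} else (UNIV::real set))"
  have Bs: "B \<in> sets (\<mu> n)" unfolding B_def by (rule sets_PiM_I_finite) auto
  have "emeasure (\<mu> n) B = (\<Prod>i\<in>{..<n}. emeasure U (if i = 0 then {-1/2} else UNIV))"
    unfolding B_def by (rule UP.emeasure_PiM) auto
  also have "\<dots> = 0" using False by (intro prod_zero) (auto simp: U_def intro!: bexI[of _ 0])
  finally have B0: "emeasure (\<mu> n) B = 0" .
  have "emeasure (\<mu> n) (Ph -` B \<inter> space (\<mu> n)) = emeasure (distr (\<mu> n) (\<mu> n) Ph) B"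
    unfolding Ph_def by (rule emeasure_distr[OF Phi_meas Bs, symmetric])
  also have "\<dots> = 0" unfolding Ph_def using Phi_distr[of n "-1" "\<lambda>_. -1"] False B0 by simp
  finally have N0: "emeasure (\<mu> n) (Ph -` B \<inter> space (\<mu> n)) = 0" .
  have m: "Ph -` B \<inter> space (\<mu> n) \<in> sets (\<mu> n)" unfolding Ph_def using Phi_meas Bs by (rule measurable_sets)
  have sub: "{y \<in> space (\<mu> n). \<not> fr (- (\<Sum>j<n. y j)) \<noteq> -1/2} \<subseteq> Ph -` B \<inter> space (\<mu> n)"
  proof
    fix y assume y: "y \<in> {y \<in> space (\<mu> n). \<not> fr (- (\<Sum>j<n. y j)) \<noteq> -1/2}"
    then have "Ph y 0 = -1/2" using ph0 by simp
    moreover have "Ph y \<in> space (\<mu> n)" using y Phi_meas unfolding Ph_def by (auto intro: measurable_space)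
    ultimately have "Ph y \<in> B" unfolding B_def by (auto simp: space_PiM PiE_iff)
    then show "y \<in> Ph -` B \<inter> space (\<mu> n)" using y by auto
  qed
  show ?thesis by (rule AE_I[OF sub N0 m])
qed

lemma Gm_meas: "Gm L \<in> measurable (\<mu> (L-1)) (\<Lambda> L)"
  unfolding Gm_def
proof (rule measurable_restrict)
  fix i assume "i \<in> {..<L}"
  note sum_meas[measurable]
  show "(\<lambda>y. if i < L - 1 then y i else fr (- (\<Sum>j<L - 1. y j))) \<in> measurable (\<mu> (L-1)) lborel"
  proof (cases "i < L - 1")
    case True
    then show ?thesis using comp_meas[OF True] by simp
  next
    case False
    have "(\<lambda>y. fr (- (\<Sum>j<L - 1. y j))) \<in> borel_measurable (\<mu> (L-1))" by measurable
    then show ?thesis using False by simp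
  qed
qed

lemma hp_meas: "hyp_param L k \<in> measurable (\<Lambda> (L-1)) (\<Lambda> L)"
  unfolding hyp_param_def
proof (rule measurable_restrict)
  fix i assume "i \<in> {..<L}"
  have cm: "(\<lambda>y. y j) \<in> borel_measurable (\<Lambda> (L-1))" if "j < L - 1" for j
    using measurable_component_singleton[of j "{..<L-1}" "\<lambda>_. lborel"] that by simp
  have sm: "(\<lambda>y. \<Sum>j<L-1. y j) \<in> borel_measurable (\<Lambda> (L-1))"
    by (rule borel_measurable_sum) (auto intro: cm)
  show "(\<lambda>y. if i < L - 1 then y i else real_of_int k - (\<Sum>j<L - 1. y j)) \<in> measurable (\<Lambda> (L-1)) lborel"
  proof (cases "i < L - 1")
    case True
    then show ?thesis using cm[OF True] by simp
  next
    case False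
    have "(\<lambda>y. real_of_int k - (\<Sum>j<L - 1. y j)) \<in> borel_measurable (\<Lambda> (L-1))" using sm by measurable
    then show ?thesis using False by simp
  qed
qed

lemma cube_sets: "cube L \<in> sets (\<Lambda> L)" unfolding cube_def by (rule sets_PiM_I_finite) auto

lemma hpG: "of_int k - (\<Sum>j<L-1. y j) = fr (- (\<Sum>j<L-1. y j)) \<Longrightarrow> hyp_param L k y = Gm L y"
  by (auto simp: hyp_param_def Gm_def)

lemma surf_eq:
  assumes L: "L \<ge> 1" and A: "A \<in> sets (\<Lambda> L)"
  shows "surf L (A \<inter> cube L) = ennreal (sqrt (real L)) * emeasure (\<mu> (L-1)) {y \<in> space (\<mu> (L-1)). Gm L y \<in> A}"
proof -
  define N where "N = L - 1"
  define S where "S k = hyp_param L k -` (A \<inter> cube L) \<inter> space (\<Lambda> N)" for k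
  have AC: "A \<inter> cube L \<in> sets (\<Lambda> L)" using A cube_sets by auto
  have Ss: "S k \<in> sets (\<Lambda> N)" for k
    unfolding S_def N_def by (rule measurable_sets[OF hp_meas AC])
  define E where "E = {y \<in> space (\<Lambda> N). y \<in> cubeN N \<and> fr (- (\<Sum>j<N. y j)) \<noteq> -1/2 \<and> Gm L y \<in> A}"
  have memS: "y \<in> S k \<longleftrightarrow> y \<in> space (\<Lambda> N) \<and> (\<forall>i<N. y i \<in> {-1/2<..<1/2}) \<and>
      of_int k - (\<Sum>j<N. y j) \<in> {-1/2<..<1/2} \<and> hyp_param L k y \<in> A" for y k
  proof -
    have "hyp_param L k y \<in> cube L \<longleftrightarrow> (\<forall>i<N. y i \<in> {-1/2<..<1/2}) \<and> of_int k - (\<Sum>j<N. y j) \<in> {-1/2<..<1/2}"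
    proof
      assume h: "hyp_param L k y \<in> cube L"
      have "hyp_param L k y i \<in> {-1/2<..<1/2}" if "i < L" for i
        using h that unfolding cube_def by (auto simp: PiE_iff)
      have a: "\<forall>i<N. y i \<in> {-1/2<..<1/2}"
      proof (intro allI impI)
        fix i assume "i < N"
        then have "i < L" "i < L - 1" using L unfolding N_def by auto
        then show "y i \<in> {-1/2<..<1/2}" using \<open>\<And>i. i < L \<Longrightarrow> _\<close>[of i] unfolding hyp_param_def by simp
      qed
      have "N < L" "\<not> N < L - 1" using L unfolding N_def by auto
      then have "of_int k - (\<Sum>j<N. y j) \<in> {-1/2<..<1/2}"
        using \<open>\<And>i. i < L \<Longrightarrow> _\<close>[of N] unfolding hyp_param_def N_def by simp
      with a show "(\<forall>i<N. y i \<in> {-1/2<..<1/2}) \<and> of_int k - (\<Sum>j<N. y j) \<in> {-1/2<..<1/2}" by blast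
    next
      assume "(\<forall>i<N. y i \<in> {-1/2<..<1/2}) \<and> of_int k - (\<Sum>j<N. y j) \<in> {-1/2<..<1/2}"
      then show "hyp_param L k y \<in> cube L" unfolding cube_def hyp_param_def N_def by auto
    qed
    then show ?thesis unfolding S_def by auto
  qed
  have UE: "(\<Union>k. S k) = E"
  proof (intro equalityI subsetI)
    fix y assume "y \<in> (\<Union>k. S k)"
    then obtain k where y: "y \<in> S k" by auto
    let ?s = "\<Sum>j<N. y j"
    have y2: "y \<in> space (\<Lambda> N)" "\<forall>i<N. y i \<in> {-1/2<..<1/2}" "of_int k - ?s \<in> {-1/2<..<1/2}" "hyp_param L k y \<in> A"
      using memS[where y=y and k=k] y by blast+
    have f1: "fr (of_int k - ?s) = of_int k - ?s" using y2(3) by (intro fr_id) auto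
    have f2: "fr (of_int k - ?s) = fr (- ?s)" by (rule fr_cong[where n=k]) simp
    have e: "of_int k - ?s = fr (- ?s)" using f1 f2 by linarith
    have "hyp_param L k y = Gm L y" using hpG[where k=k and L=L and y=y] e unfolding N_def by blast
    then have g: "Gm L y \<in> A" using y2(4) by simp
    have c: "y \<in> cubeN N" using y2(1,2) unfolding cubeN_def by (auto simp: space_PiM PiE_iff)
    have h: "fr (- ?s) \<noteq> -1/2" using y2(3) e by auto
    show "y \<in> E" unfolding E_def using y2(1) c h g by blast
  next
    fix y assume "y \<in> E"
    then have y: "y \<in> space (\<Lambda> N)" "y \<in> cubeN N" "fr (- (\<Sum>j<N. y j)) \<noteq> -1/2" "Gm L y \<in> A"
      unfolding E_def by auto
    let ?s = "\<Sum>j<N. y j"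
    define k where "k = - round (- ?s)"
    have e: "of_int k - ?s = fr (- ?s)" unfolding k_def fr_def by simp
    have "of_int k - ?s \<in> {-1/2<..<1/2}" unfolding e using y(3) fr_ge[of "- ?s"] fr_lt[of "- ?s"] by auto
    moreover have hG: "hyp_param L k y = Gm L y" using hpG[where k=k and L=L and y=y] e unfolding N_def by blast
    then have "hyp_param L k y \<in> A" using y(4) by simp
    moreover have "\<forall>i<N. y i \<in> {-1/2<..<1/2}" using y(2) unfolding cubeN_def by (auto simp: PiE_iff)
    ultimately have "y \<in> S k" using memS[where y=y and k=k] y(1) by blast
    then show "y \<in> (\<Union>k. S k)" by auto
  qed
  have disj: "disjoint_family_on S UNIV"
    unfolding disjoint_family_on_def
  proof (intro ballI impI)
    fix k k' :: int assume "k \<noteq> k'"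
    show "S k \<inter> S k' = {}"
    proof (rule ccontr)
      assume "S k \<inter> S k' \<noteq> {}"
      then obtain y where "y \<in> S k" "y \<in> S k'" by auto
      then have "of_int k - (\<Sum>j<N. y j) \<in> {-1/2<..<1/2}" "of_int k' - (\<Sum>j<N. y j) \<in> {-1/2<..<1/2}"
        using memS[where y=y and k=k] memS[where y=y and k=k'] by blast+
      then have "\<bar>k - k'\<bar> < 1" unfolding greaterThanLessThan_iff by linarith
      then show False using \<open>k \<noteq> k'\<close> by auto
    qed
  qed
  have "surf L (A \<inter> cube L) = (\<integral>\<^sup>+k. ennreal (sqrt (real L)) * emeasure (\<Lambda> N) (S k) \<partial>count_space UNIV)"
    unfolding surf_def S_def N_def ..
  also have "\<dots> = ennreal (sqrt (real L)) * (\<integral>\<^sup>+k. emeasure (\<Lambda> N) (S k) \<partial>count_space UNIV)"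
    by (rule nn_integral_cmult) simp
  also have "(\<integral>\<^sup>+k. emeasure (\<Lambda> N) (S k) \<partial>count_space UNIV) = emeasure (\<Lambda> N) (\<Union>(S ` UNIV))"
    by (rule emeasure_UN_countable[symmetric]) (use Ss disj in auto)
  also have "\<Union>(S ` UNIV) = E" using UE by simp
  also have "emeasure (\<Lambda> N) E = emeasure (\<mu> N) E"
  proof (rule LU)
    have m1: "{y \<in> space (\<mu> N). fr (- (\<Sum>j<N. y j)) \<noteq> -1/2} \<in> sets (\<mu> N)"
      using sum_meas[of N] by measurable
    have m2: "Gm L -` A \<inter> space (\<mu> N) \<in> sets (\<mu> N)"
      using measurable_sets[OF Gm_meas A] unfolding N_def .
    have "E = cubeN N \<inter> {y \<in> space (\<mu> N). fr (- (\<Sum>j<N. y j)) \<noteq> -1/2} \<inter> (Gm L -` A \<inter> space (\<mu> N))"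
      unfolding E_def space_mu by auto
    moreover have "cubeN N \<in> sets (\<mu> N)" using cubeN_sets[of N] sets_mu by blast
    ultimately have "E \<in> sets (\<mu> N)" using m1 m2 by (simp only: sets.Int)
    then show "E \<in> sets (\<Lambda> N)" using sets_mu by blast
    show "E \<subseteq> cubeN N" unfolding E_def by auto
  qed
  also have "emeasure (\<mu> N) E = emeasure (\<mu> N) {y \<in> space (\<mu> N). Gm L y \<in> A}"
  proof (rule emeasure_eq_AE)
    show "AE y in \<mu> N. (y \<in> E) = (y \<in> {y \<in> space (\<mu> N). Gm L y \<in> A})"
      using mu_cube_AE[of N] null_half[of N] by eventually_elim (auto simp: E_def space_mu)
    have m1: "{y \<in> space (\<mu> N). fr (- (\<Sum>j<N. y j)) \<noteq> -1/2} \<in> sets (\<mu> N)"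
      using sum_meas[of N] by measurable
    have m2: "Gm L -` A \<inter> space (\<mu> N) \<in> sets (\<mu> N)"
      using measurable_sets[OF Gm_meas A] unfolding N_def .
    have "E = cubeN N \<inter> {y \<in> space (\<mu> N). fr (- (\<Sum>j<N. y j)) \<noteq> -1/2} \<inter> (Gm L -` A \<inter> space (\<mu> N))"
      unfolding E_def space_mu by auto
    moreover have "cubeN N \<in> sets (\<mu> N)" using cubeN_sets[of N] sets_mu by blast
    ultimately show "E \<in> sets (\<mu> N)" using m1 m2 by (simp only: sets.Int)
    have "{y \<in> space (\<mu> N). Gm L y \<in> A} = Gm L -` A \<inter> space (\<mu> N)" by auto
    then show "{y \<in> space (\<mu> N). Gm L y \<in> A} \<in> sets (\<mu> N)" using m2 by simp
  qed
  finally show ?thesis unfolding N_def .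
qed

theorem proposition4:
  fixes L :: nat
  assumes "L \<ge> 1"
  defines "P \<equiv> PiM {..<L} (\<lambda>_. uniform_measure lborel {-1/2<..<(1/2::real)})"
  shows "\<forall>A \<in> sets (PiM {..<L} (\<lambda>_. (lborel :: real measure))).
           emeasure P {a \<in> space P. omega L a \<in> A} = norm_surf L A"
proof
  fix A assume A: "A \<in> sets (PiM {..<L} (\<lambda>_. (lborel :: real measure)))"
  have P: "P = \<mu> L" unfolding P_def U_def ..
  define X where "X = emeasure (\<mu> (L-1)) {y \<in> space (\<mu> (L-1)). Gm L y \<in> A}"
  have Bs: "Gm L -` A \<inter> space (\<mu> (L-1)) \<in> sets (\<mu> (L-1))"
    using measurable_sets[OF Gm_meas A] .
  have "{a \<in> space (\<mu> L). omega L a \<in> A} = Ym L -` (Gm L -` A \<inter> space (\<mu> (L-1))) \<inter> space (\<mu> L)"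
    using omega_G[OF assms(1)] measurable_space[OF Ym_distr(2)[OF assms(1)]] by auto
  then have "emeasure P {a \<in> space P. omega L a \<in> A} = emeasure (distr (\<mu> L) (\<mu> (L-1)) (Ym L)) (Gm L -` A \<inter> space (\<mu> (L-1)))"
    unfolding P using emeasure_distr[OF Ym_distr(2)[OF assms(1)] Bs] by simp
  also have "\<dots> = X" unfolding Ym_distr(1)[OF assms(1)] X_def
    by (rule arg_cong[where f="emeasure (\<mu> (L-1))"]) auto
  finally have lhs: "emeasure P {a \<in> space P. omega L a \<in> A} = X" .
  have s1: "surf L (A \<inter> cube L) = ennreal (sqrt (real L)) * X"
    unfolding X_def by (rule surf_eq[OF assms(1) A])
  have cs: "cube L = space (\<Lambda> L) \<inter> cube L" unfolding cube_def by (auto simp: space_PiM PiE_iff)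
  have "surf L (cube L) = ennreal (sqrt (real L)) * emeasure (\<mu> (L-1)) {y \<in> space (\<mu> (L-1)). Gm L y \<in> space (\<Lambda> L)}"
    by (subst cs) (rule surf_eq[OF assms(1)], simp)
  also have "{y \<in> space (\<mu> (L-1)). Gm L y \<in> space (\<Lambda> L)} = space (\<mu> (L-1))"
    by (auto simp: Gm_def space_PiM)
  also have "emeasure (\<mu> (L-1)) (space (\<mu> (L-1))) = 1"
    by (rule prob_space.emeasure_space_1[OF prob_mu])
  finally have s2: "surf L (cube L) = ennreal (sqrt (real L))" by simp
  have pos: "ennreal (sqrt (real L)) \<noteq> 0" "ennreal (sqrt (real L)) \<noteq> top" using assms(1) by auto
  have "norm_surf L A = X"
    unfolding norm_surf_def s1 s2 using pos by (metis ennreal_mult_divide_eq mult.commute)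
  then show "emeasure P {a \<in> space P. omega L a \<in> A} = norm_surf L A" using lhs by simp
qed

end
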